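(* Let $X_1,\dots,X_n$ ($n\ge 1$) and $Y$ be jointly distributed discrete random variables with $I(\mathbf X;Y)>0$, where $\mathbf X=(X_1,\dots,X_n)$, and let $\Pi$ be any partial information decomposition (as defined in the context). Then $$\mathrm{RSI}(\mathbf X;Y)=(\bar r-1)\,I(\mathbf X;Y).$$
   Context: Notation: $[n]=\{1,\dots,n\}$. For $\mathbf a\subseteq[n]$, $X_{\mathbf a}=(X_i)_{i\in\mathbf a}$. Antichains: $\mathcal A_n$ is the set of all nonempty collections $\alpha$ of nonempty subsets of $[n]$ such that no element of $\alpha$ is a proper subset of another element of $\alpha$. Partial information decomposition (PID): any function $\Pi:\mathcal A_n\to\mathbb R$ satisfying, for every nonempty $\mathbf a\subseteq[n]$, $$I(X_{\mathbf a};Y)=\sum_{\alpha\in\mathcal A_n:\ \exists \mathbf b\in\alpha,\ \mathbf b\subseteq \mathbf a}\Pi(\alpha).$$ Degree of redundancy: $r(\alpha)=|\{i\in[n]: \{i\}\in\alpha\}|$. Average degree of redundancy: $\bar r=\sum_{k=0}^n k\sum_{\alpha:\ r(\alpha)=k}\Pi(\alpha)/I(\mathbf X;Y)$. Redundancy-synergy index: $\mathrm{RSI}(\mathbf X;Y)=\sum_{i=1}^n I(X_i;Y)-I(\mathbf X;Y)$. *)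

theory Defs
  imports "HOL-Probability.Probability"
begin

definition MI :: "'o measure \<Rightarrow> real \<Rightarrow> ('o \<Rightarrow> 'x) \<Rightarrow> ('o \<Rightarrow> 'y) \<Rightarrow> real" where
  "MI M b X Y = prob_space.mutual_information M b (count_space (X ` space M)) (count_space (Y ` space M)) X Y"

definition subvec :: "(nat \<Rightarrow> 'o \<Rightarrow> 'a) \<Rightarrow> nat set \<Rightarrow> 'o \<Rightarrow> (nat \<Rightarrow> 'a)" where
  "subvec X a = (\<lambda>\<omega>. restrict (\<lambda>i. X i \<omega>) a)"

definition antichains :: "nat \<Rightarrow> nat set set set" where
  "antichains n = {\<alpha>. \<alpha> \<noteq> {} \<and> (\<forall>b\<in>\<alpha>. b \<noteq> {} \<and> b \<subseteq> {1..n}) \<and>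
                        (\<forall>b\<in>\<alpha>. \<forall>c\<in>\<alpha>. \<not> b \<subset> c)}"

definition is_PID :: "'o measure \<Rightarrow> real \<Rightarrow> nat \<Rightarrow> (nat \<Rightarrow> 'o \<Rightarrow> 'a) \<Rightarrow> ('o \<Rightarrow> 'y)
                      \<Rightarrow> (nat set set \<Rightarrow> real) \<Rightarrow> bool" where
  "is_PID M b n X Y PI \<longleftrightarrow>
     (\<forall>a. a \<noteq> {} \<and> a \<subseteq> {1..n} \<longrightarrow>
        MI M b (subvec X a) Y = (\<Sum>\<alpha>\<in>{\<alpha>\<in>antichains n. \<exists>c\<in>\<alpha>. c \<subseteq> a}. PI \<alpha>))"

definition red_degree :: "nat \<Rightarrow> nat set set \<Rightarrow> nat" where
  "red_degree n \<alpha> = card {i\<in>{1..n}. {i} \<in> \<alpha>}"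

definition avg_red_degree :: "'o measure \<Rightarrow> real \<Rightarrow> nat \<Rightarrow> (nat \<Rightarrow> 'o \<Rightarrow> 'a) \<Rightarrow> ('o \<Rightarrow> 'y)
                      \<Rightarrow> (nat set set \<Rightarrow> real) \<Rightarrow> real" where
  "avg_red_degree M b n X Y PI =
     (\<Sum>k=0..n. real k * (\<Sum>\<alpha>\<in>{\<alpha>\<in>antichains n. red_degree n \<alpha> = k}. PI \<alpha>))
       / MI M b (subvec X {1..n}) Y"

definition RSI :: "'o measure \<Rightarrow> real \<Rightarrow> nat \<Rightarrow> (nat \<Rightarrow> 'o \<Rightarrow> 'a) \<Rightarrow> ('o \<Rightarrow> 'y) \<Rightarrow> real" where
  "RSI M b n X Y = (\<Sum>i=1..n. MI M b (X i) Y) - MI M b (subvec X {1..n}) Y"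

end

theory Submission
  imports Defs
begin

lemma (in information_space) MI_inj:
  assumes X: "simple_function M X" and Y: "simple_function M Y"
    and inj: "inj_on f (X`space M)"
  shows "\<I>(f \<circ> X ; Y) = \<I>(X ; Y)"
proof -
  have fX: "simple_function M (f \<circ> X)" using X by (rule simple_function_compose)
  note sX = simple_distributedI[OF X measure_nonneg refl]
  note sfX = simple_distributedI[OF fX measure_nonneg refl]
  note sY = simple_distributedI[OF Y measure_nonneg refl]
  note sXY = simple_distributedI[OF simple_function_Pair[OF X Y] measure_nonneg refl]
  note sfXY = simple_distributedI[OF simple_function_Pair[OF fX Y] measure_nonneg refl]
  let ?g = "\<lambda>(a, c). (f a, c)"
  have eq: "(\<lambda>x. ((f \<circ> X) x, Y x)) ` space M = ?g ` (\<lambda>x. (X x, Y x)) ` space M"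
    by (auto simp: image_iff)
  have ginj: "inj_on ?g ((\<lambda>x. (X x, Y x)) ` space M)"
    using inj by (auto simp: inj_on_def)
  have pre1: "(f \<circ> X) -` {f a} \<inter> space M = X -` {a} \<inter> space M" if "a \<in> X ` space M" for a
    using inj that by (auto simp: inj_on_def)
  have pre2: "(\<lambda>x. (f (X x), Y x)) -` {(f a, c)} \<inter> space M = (\<lambda>x. (X x, Y x)) -` {(a, c)} \<inter> space M"
    if "a \<in> X ` space M" for a c
    using inj that by (auto simp: inj_on_def)
  show ?thesis
    apply (subst mutual_information_simple_distributed[OF sfX sY sfXY])
    apply (subst mutual_information_simple_distributed[OF sX sY sXY])
    apply (subst eq)
    apply (subst sum.reindex[OF ginj])
    apply (rule sum.cong)
    apply (auto simp: pre1 pre2[of "X x" "Y x" for x])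
    done
qed


lemma MI_single:
  assumes "information_space M b" "simple_function M (X i)" "simple_function M Y"
  shows "MI M b (subvec X {i}) Y = MI M b (X i) Y"
proof -
  interpret information_space M b by fact
  have "subvec X {i} = (\<lambda>x. restrict (\<lambda>j. x) {i}) \<circ> X i"
    by (auto simp: subvec_def restrict_def fun_eq_iff)
  moreover have "inj_on (\<lambda>x. restrict (\<lambda>j. x) {i}) (X i ` space M)"
    by (auto simp: inj_on_def restrict_def fun_eq_iff)
  ultimately show ?thesis unfolding MI_def using MI_inj[OF assms(2,3)] by simp
qed

lemma antichains_finite: "finite (antichains n)"
proof -
  have "antichains n \<subseteq> Pow (Pow {1..n})" by (auto simp: antichains_def)
  then show ?thesis by (rule finite_subset) auto
qed

lemma red_degree_le: "red_degree n \<alpha> \<le> n"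
proof -
  have "red_degree n \<alpha> \<le> card {1..n}" unfolding red_degree_def
    by (rule card_mono) auto
  then show ?thesis by simp
qed

theorem corollary1:
  fixes M :: "'o measure" and b :: real and n :: nat
    and X :: "nat \<Rightarrow> 'o \<Rightarrow> 'a" and Y :: "'o \<Rightarrow> 'y" and PI :: "nat set set \<Rightarrow> real"
  assumes "information_space M b"
    and "n \<ge> 1"
    and "\<And>i. i \<in> {1..n} \<Longrightarrow> simple_function M (X i)"
    and "simple_function M Y"
    and "MI M b (subvec X {1..n}) Y > 0"
    and "is_PID M b n X Y PI"
  shows "RSI M b n X Y = (avg_red_degree M b n X Y PI - 1) * MI M b (subvec X {1..n}) Y"
proof -
  let ?A = "antichains n"
  let ?I = "MI M b (subvec X {1..n}) Y"
  have fin: "finite ?A" by (rule antichains_finite)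
  have tot: "?I = sum PI ?A"
  proof -
    have "{\<alpha>\<in>?A. \<exists>c\<in>\<alpha>. c \<subseteq> {1..n}} = ?A"
      by (auto simp: antichains_def)
    moreover have "{1..n} \<noteq> {}" "{1..n} \<subseteq> {1..n}" using assms(2) by auto
    ultimately show ?thesis using assms(6) unfolding is_PID_def by simp
  qed
  have single: "MI M b (X i) Y = (\<Sum>\<alpha>\<in>?A. if {i} \<in> \<alpha> then PI \<alpha> else 0)" if i: "i \<in> {1..n}" for i
  proof -
    have "MI M b (X i) Y = MI M b (subvec X {i}) Y"
      using MI_single[of M b X i Y] assms(1,4) assms(3)[OF i] by simp
    also have "\<dots> = (\<Sum>\<alpha>\<in>{\<alpha>\<in>?A. \<exists>c\<in>\<alpha>. c \<subseteq> {i}}. PI \<alpha>)"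
      using assms(6) i unfolding is_PID_def by auto
    also have "{\<alpha>\<in>?A. \<exists>c\<in>\<alpha>. c \<subseteq> {i}} = {\<alpha>\<in>?A. {i} \<in> \<alpha>}"
      by (auto simp: antichains_def subset_singleton_iff)
    also have "(\<Sum>\<alpha>\<in>{\<alpha>\<in>?A. {i} \<in> \<alpha>}. PI \<alpha>) = (\<Sum>\<alpha>\<in>?A. if {i} \<in> \<alpha> then PI \<alpha> else 0)"
      using fin by (simp add: sum.inter_filter)
    finally show ?thesis .
  qed
  have S: "(\<Sum>i=1..n. MI M b (X i) Y) = (\<Sum>\<alpha>\<in>?A. real (red_degree n \<alpha>) * PI \<alpha>)"
  proof -
    have "(\<Sum>i=1..n. MI M b (X i) Y) = (\<Sum>i=1..n. \<Sum>\<alpha>\<in>?A. if {i} \<in> \<alpha> then PI \<alpha> else 0)"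
      by (rule sum.cong) (auto simp: single)
    also have "\<dots> = (\<Sum>\<alpha>\<in>?A. \<Sum>i=1..n. if {i} \<in> \<alpha> then PI \<alpha> else 0)"
      by (rule sum.swap)
    also have "\<dots> = (\<Sum>\<alpha>\<in>?A. real (red_degree n \<alpha>) * PI \<alpha>)"
      proof (rule sum.cong[OF refl])
      fix \<alpha> assume "\<alpha> \<in> ?A"
      have "(\<Sum>i=1..n. if {i} \<in> \<alpha> then PI \<alpha> else 0) = (\<Sum>i\<in>{i\<in>{1..n}. {i} \<in> \<alpha>}. PI \<alpha>)"
        by (rule sum.inter_filter[symmetric]) simp
      also have "\<dots> = real (card {i\<in>{1..n}. {i} \<in> \<alpha>}) * PI \<alpha>"
        by (rule sum_constant)
      finally show "(\<Sum>i=1..n. if {i} \<in> \<alpha> then PI \<alpha> else 0) = real (red_degree n \<alpha>) * PI \<alpha>"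
        unfolding red_degree_def .
    qed
    finally show ?thesis .
  qed
  have K: "(\<Sum>k=0..n. real k * (\<Sum>\<alpha>\<in>{\<alpha>\<in>?A. red_degree n \<alpha> = k}. PI \<alpha>))
      = (\<Sum>\<alpha>\<in>?A. real (red_degree n \<alpha>) * PI \<alpha>)"
  proof -
    have "(\<Sum>k=0..n. real k * (\<Sum>\<alpha>\<in>{\<alpha>\<in>?A. red_degree n \<alpha> = k}. PI \<alpha>))
        = (\<Sum>k=0..n. (\<Sum>\<alpha>\<in>{\<alpha>\<in>?A. red_degree n \<alpha> = k}. real (red_degree n \<alpha>) * PI \<alpha>))"
      by (rule sum.cong) (auto simp: sum_distrib_left)
    also have "\<dots> = (\<Sum>\<alpha>\<in>?A. real (red_degree n \<alpha>) * PI \<alpha>)"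
      by (rule sum.group) (auto simp: fin red_degree_le)
    finally show ?thesis .
  qed
  show ?thesis
    unfolding RSI_def avg_red_degree_def K S
    using assms(5) tot by (simp add: field_simps)
qed

end
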